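(* Let $\mathcal{H}_X,\mathcal{H}_Y$ be reproducing kernel Hilbert spaces, let $(X_1,Y_1),\dots,(X_n,Y_n)$ be data points with centered feature vectors $\tilde{\Phi}(X_i)\in\mathcal{H}_X$, $\tilde{\Phi}(Y_i)\in\mathcal{H}_Y$. Let $\zeta:[0,\infty)\to\mathbb{R}$ satisfy (i) $\zeta$ is non-decreasing, $\zeta(0)=0$ and $\zeta(t)/t\to0$ as $t\to0$; (ii) $\varphi(t)=\zeta'(t)/t$ exists and is finite; (iii) $\zeta'$ and $\varphi$ are continuous and bounded; and assume moreover that $\varphi$ is non-increasing. Let $$J(\Sigma)=\sum_{i=1}^n \zeta\big(\|\tilde{\Phi}(X_i)\otimes\tilde{\Phi}(Y_i)-\Sigma\|\big),\qquad S(\Sigma)=\sum_{i=1}^n\varphi\big(\|\tilde{\Phi}(X_i)\otimes\tilde{\Phi}(Y_i)-\Sigma\|\big)\big(\tilde{\Phi}(X_i)\otimes\tilde{\Phi}(Y_i)-\Sigma\big),$$ norms being in $\mathcal{H}_X\otimes\mathcal{H}_Y$, and let $U=\{\Sigma\in\mathcal{H}_X\otimes\mathcal{H}_Y: S(\Sigma)=0\}$. Let $\{\Sigma^{(h)}\}_{h\ge1}$ be the sequence produced by the KIRWLS algorithm, i.e. $\Sigma^{(h+1)}=\sum_{i=1}^n w_i^{(h)}\tilde{\Phi}(X_i)\otimes\tilde{\Phi}(Y_i)$ with $$w_i^{(h)}=\frac{\varphi(\|\tilde{\Phi}(X_i)\otimes\tilde{\Phi}(Y_i)-\Sigma^{(h)}\|)}{\sum_{b=1}^n\varphi(\|\tilde{\Phi}(X_b)\otimes\tilde{\Phi}(Y_b)-\Sigma^{(h)}\|)}.$$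 Then $J(\Sigma^{(h)})$ decreases monotonically at every iteration and converges, and $$\inf_{\Sigma\in U}\|\Sigma^{(h)}-\Sigma\|_{\mathcal{H}_X\otimes\mathcal{H}_Y}\to0\quad\text{as }h\to\infty.$$
   Context: Centered feature vectors are $\tilde{\Phi}(X_i)=k_X(\cdot,X_i)-m_X$, $\tilde{\Phi}(Y_i)=k_Y(\cdot,Y_i)-m_Y$ for positive definite kernels $k_X,k_Y$ and fixed (empirical, possibly weighted) kernel mean elements $m_X\in\mathcal{H}_X$, $m_Y\in\mathcal{H}_Y$. $\mathcal{H}_X\otimes\mathcal{H}_Y$ is the Hilbert tensor product (Hilbert–Schmidt norm). *)

theory Defs
  imports "HOL-Analysis.Analysis"
begin

definition is_hilbert_tensor ::
  "('a::real_inner \<Rightarrow> 'b::real_inner \<Rightarrow> 'h::real_inner) \<Rightarrow> bool" where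
  "is_hilbert_tensor tens \<longleftrightarrow>
     bounded_bilinear tens \<and>
     (\<forall>a b c d. inner (tens a b) (tens c d) = inner a c * inner b d) \<and>
     closure (span (range (\<lambda>(a, b). tens a b))) = UNIV"

text \<open>Objective J, estimating-equation map S and its zero set U
  (points are indexed by i < n; Z i plays the role of the tensor of centered features).\<close>
definition obj_J :: "(real \<Rightarrow> real) \<Rightarrow> nat \<Rightarrow> (nat \<Rightarrow> 'h::real_normed_vector) \<Rightarrow> 'h \<Rightarrow> real" where
  "obj_J \<zeta> n Z \<Sigma> = (\<Sum>i<n. \<zeta> (norm (Z i - \<Sigma>)))"

definition map_S :: "(real \<Rightarrow> real) \<Rightarrow> nat \<Rightarrow> (nat \<Rightarrow> 'h::real_normed_vector) \<Rightarrow> 'h \<Rightarrow> 'h" where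
  "map_S \<phi> n Z \<Sigma> = (\<Sum>i<n. \<phi> (norm (Z i - \<Sigma>)) *\<^sub>R (Z i - \<Sigma>))"

definition zero_set_U :: "(real \<Rightarrow> real) \<Rightarrow> nat \<Rightarrow> (nat \<Rightarrow> 'h::real_normed_vector) \<Rightarrow> 'h set" where
  "zero_set_U \<phi> n Z = {\<Sigma>. map_S \<phi> n Z \<Sigma> = 0}"

definition kirwls_weight :: "(real \<Rightarrow> real) \<Rightarrow> nat \<Rightarrow> (nat \<Rightarrow> 'h::real_normed_vector) \<Rightarrow> 'h \<Rightarrow> nat \<Rightarrow> real" where
  "kirwls_weight \<phi> n Z \<Sigma> i = \<phi> (norm (Z i - \<Sigma>)) / (\<Sum>b<n. \<phi> (norm (Z b - \<Sigma>)))"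

end

theory Submission
  imports Defs
begin

lemma deriv_at_pos:
  assumes "\<And>t. t \<ge> 0 \<Longrightarrow> (\<zeta> has_real_derivative \<zeta>' t) (at t within {0..})" "(t::real) > 0"
  shows "(\<zeta> has_real_derivative \<zeta>' t) (at t)"
proof -
  have "at t within {0..} = at t"
    by (rule at_within_interior) (use assms(2) in \<open>simp add: interior_real_atLeast\<close>)
  with assms(1)[of t] assms(2) show ?thesis by simp
qed

lemma zeta'_nonneg:
  assumes d: "\<And>t. t \<ge> 0 \<Longrightarrow> (\<zeta> has_real_derivative \<zeta>' t) (at t within {0..})"
    and m: "mono_on {0..} \<zeta>" and t: "(t::real) > 0"
  shows "\<zeta>' t \<ge> 0"
proof (rule ccontr)
  assume "\<not> \<zeta>' t \<ge> 0"
  hence neg: "\<zeta>' t < 0" by simp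
  from DERIV_neg_dec_right[OF deriv_at_pos[OF d t] neg]
  obtain e where e: "e > 0" "\<And>h. 0 < h \<Longrightarrow> h < e \<Longrightarrow> \<zeta> t > \<zeta> (t + h)" by blast
  have "\<zeta> t > \<zeta> (t + e/2)" using e by simp
  moreover have "\<zeta> t \<le> \<zeta> (t + e/2)" using m t e by (intro mono_onD[OF m]) auto
  ultimately show False by simp
qed

lemma zeta_major:
  fixes \<zeta> \<zeta>' \<phi> :: "real \<Rightarrow> real"
  assumes d: "\<And>t. t \<ge> 0 \<Longrightarrow> (\<zeta> has_real_derivative \<zeta>' t) (at t within {0..})"
    and phi_def: "\<And>t. t > 0 \<Longrightarrow> \<phi> t = \<zeta>' t / t"
    and am: "antimono_on {0..} \<phi>"
    and r: "r \<ge> 0" and r0: "r0 \<ge> 0"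
  shows "\<zeta> r \<le> \<zeta> r0 + \<phi> r0 / 2 * (r\<^sup>2 - r0\<^sup>2)"
proof -
  define g where "g x = \<zeta> x - \<phi> r0 / 2 * x\<^sup>2" for x
  have cont: "continuous_on {0..} g"
  proof -
    have "continuous_on {0..} \<zeta>"
      unfolding continuous_on_eq_continuous_within
      using d DERIV_continuous by blast
    thus ?thesis unfolding g_def by (intro continuous_intros)
  qed
  have gd: "(g has_real_derivative (x * (\<phi> x - \<phi> r0))) (at x)" if "x > 0" for x
  proof -
    have "(g has_real_derivative (\<zeta>' x - \<phi> r0 / 2 * (2 * x))) (at x)"
      unfolding g_def using deriv_at_pos[OF d that]
      by (auto intro!: derivative_eq_intros)
    moreover have "\<zeta>' x = x * \<phi> x" using phi_def[OF that] that by simp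
    ultimately show ?thesis by (simp add: algebra_simps)
  qed
  have "g r \<le> g r0"
  proof (cases "r0 < r")
    case True
    have "continuous_on {r0..r} g" using r0 by (intro continuous_on_subset[OF cont]) auto
    moreover have "\<forall>x. r0 < x \<and> x < r \<longrightarrow> g differentiable (at x)"
      proof (intro allI impI)
      fix x assume "r0 < x \<and> x < r"
      hence "x > 0" using r0 by linarith
      from gd[OF this] show "g differentiable (at x)" by (rule real_differentiable_def[THEN iffD2, OF exI])
    qed
    ultimately obtain l z where z: "r0 < z" "z < r" "DERIV g z :> l" "g r - g r0 = (r - r0) * l"
      using MVT[OF True] by blast
    have "l = z * (\<phi> z - \<phi> r0)" using DERIV_unique[OF z(3) gd] z r0 by simp
    moreover have "\<phi> z \<le> \<phi> r0" using am r0 z by (intro monotone_onD[OF am]) auto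
    ultimately have "l \<le> 0" using z r0 by (simp add: mult_nonneg_nonpos)
    hence "(r - r0) * l \<le> 0" using True by (simp add: mult_nonneg_nonpos)
    thus ?thesis using z(4) by linarith
  next
    case False
    show ?thesis
    proof (cases "r = r0")
      case False
      with \<open>\<not> r0 < r\<close> have lt: "r < r0" by simp
      have "continuous_on {r..r0} g" using r by (intro continuous_on_subset[OF cont]) auto
      moreover have "\<forall>x. r < x \<and> x < r0 \<longrightarrow> g differentiable (at x)"
        proof (intro allI impI)
        fix x assume "r < x \<and> x < r0"
        hence "x > 0" using r by linarith
        from gd[OF this] show "g differentiable (at x)" by (rule real_differentiable_def[THEN iffD2, OF exI])
      qed
      ultimately obtain l z where z: "r < z" "z < r0" "DERIV g z :> l" "g r0 - g r = (r0 - r) * l"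
        using MVT[OF lt] by blast
      have "l = z * (\<phi> z - \<phi> r0)" using DERIV_unique[OF z(3) gd] z r by simp
      moreover have "\<phi> r0 \<le> \<phi> z" using am r z by (intro monotone_onD[OF am]) auto
      ultimately have "l \<ge> 0" using z r by simp
      hence "(r0 - r) * l \<ge> 0" using lt by simp
      thus ?thesis using z(4) by linarith
    qed simp
  qed
  thus ?thesis unfolding g_def by (simp add: algebra_simps)
qed

lemma sum_aux:
  fixes a c x y :: "nat \<Rightarrow> real"
  shows "(\<Sum>i<n. a i + c i / 2 * (x i - y i)) = (\<Sum>i<n. a i) + ((\<Sum>i<n. c i * x i) - (\<Sum>i<n. c i * y i)) / 2"
proof -
  have "(\<Sum>i<n. a i + c i / 2 * (x i - y i)) = (\<Sum>i<n. a i) + (\<Sum>i<n. (c i * x i - c i * y i) / 2)"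
    by (simp add: sum.distrib algebra_simps)
  also have "(\<Sum>i<n. (c i * x i - c i * y i) / 2) = ((\<Sum>i<n. c i * x i) - (\<Sum>i<n. c i * y i)) / 2"
    by (simp add: sum_divide_distrib[symmetric] sum_subtractf)
  finally show ?thesis .
qed

lemma wmean:
  fixes Z :: "nat \<Rightarrow> 'h::real_inner"
  assumes W: "W = (\<Sum>i<n. c i)" "W \<noteq> 0" and S': "S' = (\<Sum>i<n. (c i / W) *\<^sub>R Z i)"
  shows "(\<Sum>i<n. c i *\<^sub>R (Z i - S)) = W *\<^sub>R (S' - S)"
    and "(\<Sum>i<n. c i * (norm (Z i - S'))\<^sup>2) = (\<Sum>i<n. c i * (norm (Z i - S))\<^sup>2) - W * (norm (S' - S))\<^sup>2"
proof -
  have "W *\<^sub>R S' = (\<Sum>i<n. c i *\<^sub>R Z i)"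
    using W(2) by (simp add: S' scaleR_sum_right)
  thus A: "(\<Sum>i<n. c i *\<^sub>R (Z i - S)) = W *\<^sub>R (S' - S)"
    by (simp add: scaleR_diff_right sum_subtractf W(1) scaleR_sum_left[symmetric])
  have e: "(norm (Z i - S'))\<^sup>2 = (norm (Z i - S))\<^sup>2 - 2 * inner (Z i - S) (S' - S) + (norm (S' - S))\<^sup>2" for i
  proof -
    have "Z i - S' = (Z i - S) - (S' - S)" by simp
    hence "(norm (Z i - S'))\<^sup>2 = (norm ((Z i - S) - (S' - S)))\<^sup>2" by simp
    also have "\<dots> = (norm (Z i - S))\<^sup>2 - 2 * inner (Z i - S) (S' - S) + (norm (S' - S))\<^sup>2"
      by (simp add: power2_norm_eq_inner inner_diff_left inner_diff_right inner_commute algebra_simps)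
    finally show ?thesis .
  qed
  have "(\<Sum>i<n. c i * (norm (Z i - S'))\<^sup>2) = (\<Sum>i<n. c i * (norm (Z i - S))\<^sup>2)
      - 2 * inner (\<Sum>i<n. c i *\<^sub>R (Z i - S)) (S' - S) + W * (norm (S' - S))\<^sup>2"
    by (simp add: e algebra_simps sum.distrib sum_subtractf inner_sum_left sum_distrib_left sum_distrib_right W(1))
  also have "\<dots> = (\<Sum>i<n. c i * (norm (Z i - S))\<^sup>2) - W * (norm (S' - S))\<^sup>2"
    unfolding A by (simp add: power2_norm_eq_inner)
  finally show "(\<Sum>i<n. c i * (norm (Z i - S'))\<^sup>2) = (\<Sum>i<n. c i * (norm (Z i - S))\<^sup>2) - W * (norm (S' - S))\<^sup>2" .
qed

theorem theorem3:
  fixes tens :: "'a::{real_inner,complete_space} \<Rightarrow> 'b::{real_inner,complete_space} \<Rightarrow> 'h::{real_inner,complete_space}"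
    and n :: nat
    and fx :: "nat \<Rightarrow> 'a" and fy :: "nat \<Rightarrow> 'b"
    and \<zeta> \<zeta>' \<phi> :: "real \<Rightarrow> real"
    and \<Sigma> :: "nat \<Rightarrow> 'h"
  assumes tensor: "is_hilbert_tensor tens"
    and zeta_mono: "mono_on {0..} \<zeta>"
    and zeta_0: "\<zeta> 0 = 0"
    and zeta_lim: "((\<lambda>t. \<zeta> t / t) \<longlongrightarrow> 0) (at_right 0)"
    and zeta_deriv: "\<And>t. t \<ge> 0 \<Longrightarrow> (\<zeta> has_real_derivative \<zeta>' t) (at t within {0..})"
    and phi_def: "\<And>t. t > 0 \<Longrightarrow> \<phi> t = \<zeta>' t / t"
    and zeta'_cont: "continuous_on {0..} \<zeta>'"
    and phi_cont: "continuous_on {0..} \<phi>"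
    and zeta'_bdd: "bounded (\<zeta>' ` {0..})"
    and phi_bdd: "bounded (\<phi> ` {0..})"
    and phi_antimono: "antimono_on {0..} \<phi>"
    and denom_pos: "\<And>h. (\<Sum>b<n. \<phi> (norm (tens (fx b) (fy b) - \<Sigma> h))) > 0"
    and kirwls: "\<And>h. \<Sigma> (Suc h) =
        (\<Sum>i<n. kirwls_weight \<phi> n (\<lambda>i. tens (fx i) (fy i)) (\<Sigma> h) i *\<^sub>R tens (fx i) (fy i))"
  shows "(\<forall>h. obj_J \<zeta> n (\<lambda>i. tens (fx i) (fy i)) (\<Sigma> (Suc h))
              \<le> obj_J \<zeta> n (\<lambda>i. tens (fx i) (fy i)) (\<Sigma> h))
       \<and> convergent (\<lambda>h. obj_J \<zeta> n (\<lambda>i. tens (fx i) (fy i)) (\<Sigma> h))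
       \<and> (\<lambda>h. infdist (\<Sigma> h) (zero_set_U \<phi> n (\<lambda>i. tens (fx i) (fy i)))) \<longlonglongrightarrow> 0"
proof -
  define Z where "Z i = tens (fx i) (fy i)" for i
  define W where "W h = (\<Sum>b<n. \<phi> (norm (Z b - \<Sigma> h)))" for h
  define J where "J h = obj_J \<zeta> n Z (\<Sigma> h)" for h
  have Zeq: "(\<lambda>i. tens (fx i) (fy i)) = Z" by (simp add: Z_def fun_eq_iff)
  have Wpos: "W h > 0" for h using denom_pos[of h] by (simp add: W_def Z_def)
  have phi_nn: "\<phi> t \<ge> 0" if "t \<ge> 0" for t
  proof (cases "t > 0")
    case True thus ?thesis using phi_def[OF True] zeta'_nonneg[OF zeta_deriv zeta_mono True] by simp
  next
    case False
    hence "t = 0" using that by simp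
    have "\<phi> 1 \<le> \<phi> 0" by (intro monotone_onD[OF phi_antimono]) auto
    moreover have "\<phi> 1 \<ge> 0" using phi_def[of 1] zeta'_nonneg[OF zeta_deriv zeta_mono, of 1] by simp
    ultimately show ?thesis using \<open>t = 0\<close> by simp
  qed
  have zeta_nn: "\<zeta> t \<ge> 0" if "t \<ge> 0" for t
    using monotone_onD[OF zeta_mono, of 0 t] that zeta_0 by simp
  have Sig: "\<Sigma> (Suc h) = (\<Sum>i<n. (\<phi> (norm (Z i - \<Sigma> h)) / W h) *\<^sub>R Z i)" for h
    using kirwls[of h] by (simp add: kirwls_weight_def W_def Zeq Z_def)
  have keyS: "map_S \<phi> n Z (\<Sigma> h) = W h *\<^sub>R (\<Sigma> (Suc h) - \<Sigma> h)" for h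
    unfolding map_S_def
    by (rule wmean(1)[OF W_def[of h] _ Sig]) (use Wpos[of h] in simp)
  have keyJ: "J (Suc h) \<le> J h - W h / 2 * (norm (\<Sigma> (Suc h) - \<Sigma> h))\<^sup>2" for h
  proof -
    have eq: "(\<Sum>i<n. \<phi> (norm (Z i - \<Sigma> h)) * (norm (Z i - \<Sigma> (Suc h)))\<^sup>2) =
      (\<Sum>i<n. \<phi> (norm (Z i - \<Sigma> h)) * (norm (Z i - \<Sigma> h))\<^sup>2) - W h * (norm (\<Sigma> (Suc h) - \<Sigma> h))\<^sup>2"
      by (rule wmean(2)[OF W_def[of h] _ Sig]) (use Wpos[of h] in simp)
    have "J (Suc h) \<le> (\<Sum>i<n. \<zeta> (norm (Z i - \<Sigma> h)) + \<phi> (norm (Z i - \<Sigma> h)) / 2 *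
        ((norm (Z i - \<Sigma> (Suc h)))\<^sup>2 - (norm (Z i - \<Sigma> h))\<^sup>2))"
      unfolding J_def obj_J_def
      by (intro sum_mono zeta_major[OF zeta_deriv phi_def phi_antimono]) auto
    also have "\<dots> = J h + ((\<Sum>i<n. \<phi> (norm (Z i - \<Sigma> h)) * (norm (Z i - \<Sigma> (Suc h)))\<^sup>2) -
        (\<Sum>i<n. \<phi> (norm (Z i - \<Sigma> h)) * (norm (Z i - \<Sigma> h))\<^sup>2)) / 2"
      unfolding J_def obj_J_def by (rule sum_aux)
    also have "\<dots> = J h - W h / 2 * (norm (\<Sigma> (Suc h) - \<Sigma> h))\<^sup>2"
      unfolding eq by simp
    finally show ?thesis .
  qed
  have dec: "J (Suc h) \<le> J h" for h
    using keyJ[of h] Wpos[of h] by (smt (verit) divide_nonneg_pos mult_nonneg_nonneg zero_le_power2)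
  have Jnn: "J h \<ge> 0" for h
    unfolding J_def obj_J_def by (intro sum_nonneg zeta_nn) auto
  have "antimono_on UNIV J"
    using dec by (intro monotone_onI) (auto intro: lift_Suc_antimono_le[of J])
  then obtain L where JL: "J \<longlonglongrightarrow> L"
    using decseq_convergent[of J 0] Jnn by blast
  define T where "T h = W h * (norm (\<Sigma> (Suc h) - \<Sigma> h))\<^sup>2" for h
  have T0: "T \<longlonglongrightarrow> 0"
  proof (rule tendsto_sandwich[where f="\<lambda>_. 0" and h="\<lambda>h. 2 * (J h - J (Suc h))"])
    show "\<forall>\<^sub>F h in sequentially. 0 \<le> T h"
      using Wpos by (auto simp: T_def less_imp_le)
    show "\<forall>\<^sub>F h in sequentially. T h \<le> 2 * (J h - J (Suc h))"
      using keyJ by (auto simp: T_def field_simps)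
    have "(\<lambda>h. 2 * (J h - J (Suc h))) \<longlonglongrightarrow> 2 * (L - L)"
      by (intro tendsto_intros JL LIMSEQ_Suc)
    thus "(\<lambda>h. 2 * (J h - J (Suc h))) \<longlonglongrightarrow> 0" by simp
  qed simp
  obtain B where B: "\<And>t. t \<ge> 0 \<Longrightarrow> \<bar>\<phi> t\<bar> \<le> B"
    using phi_bdd unfolding bounded_iff by fastforce
  have Wle: "W h \<le> n * B" for h
  proof -
    have "W h \<le> (\<Sum>b<n. B)" unfolding W_def
      by (intro sum_mono) (use B[of "norm (Z _ - \<Sigma> h)"] in \<open>auto simp: abs_le_iff\<close>)
    thus ?thesis by simp
  qed
  have S0: "(\<lambda>h. norm (map_S \<phi> n Z (\<Sigma> h))) \<longlonglongrightarrow> 0"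
  proof -
    have "(\<lambda>h. (norm (map_S \<phi> n Z (\<Sigma> h)))\<^sup>2) \<longlonglongrightarrow> 0"
    proof (rule tendsto_sandwich[where f="\<lambda>_. 0" and h="\<lambda>h. (n * B) * T h"])
      show "\<forall>\<^sub>F h in sequentially. (norm (map_S \<phi> n Z (\<Sigma> h)))\<^sup>2 \<le> (n * B) * T h"
      proof (intro always_eventually allI)
        fix h
        have "(norm (map_S \<phi> n Z (\<Sigma> h)))\<^sup>2 = W h * T h"
          using Wpos[of h] by (simp add: keyS T_def power2_eq_square)
        also have "\<dots> \<le> (n * B) * T h"
          using Wle[of h] Wpos[of h] by (intro mult_right_mono) (auto simp: T_def)
        finally show "(norm (map_S \<phi> n Z (\<Sigma> h)))\<^sup>2 \<le> (n * B) * T h" .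
      qed
      have "(\<lambda>h. (n * B) * T h) \<longlonglongrightarrow> (n * B) * 0" by (intro tendsto_intros T0)
      thus "(\<lambda>h. (n * B) * T h) \<longlonglongrightarrow> 0" by simp
    qed auto
    hence "(\<lambda>h. sqrt ((norm (map_S \<phi> n Z (\<Sigma> h)))\<^sup>2)) \<longlonglongrightarrow> sqrt 0"
      by (intro tendsto_intros)
    thus ?thesis by simp
  qed
  define K where "K = convex hull (Z ` {..<n})"
  have Kc: "compact K" unfolding K_def by (intro finite_imp_compact_convex_hull) auto
  have inK: "\<Sigma> (Suc h) \<in> K" for h
  proof -
    have "(\<Sum>i<n. (\<phi> (norm (Z i - \<Sigma> h)) / W h) *\<^sub>R Z i) \<in> K"
    proof (rule convex_sum)
      show "convex K" unfolding K_def by (rule convex_convex_hull)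
      show "(\<Sum>i<n. \<phi> (norm (Z i - \<Sigma> h)) / W h) = 1"
        using Wpos[of h] by (simp add: sum_divide_distrib[symmetric] W_def)
      show "\<And>i. i \<in> {..<n} \<Longrightarrow> 0 \<le> \<phi> (norm (Z i - \<Sigma> h)) / W h"
        using Wpos[of h] phi_nn by simp
      show "\<And>i. i \<in> {..<n} \<Longrightarrow> Z i \<in> K"
        unfolding K_def by (meson hull_subset image_subset_iff)
    qed simp
    thus ?thesis using Sig by simp
  qed
  define U where "U = zero_set_U \<phi> n Z"
  define F where "F x = norm (map_S \<phi> n Z x)" for x
  have Fcont: "continuous_on UNIV F"
  proof -
    have c: "continuous_on UNIV (\<lambda>x. \<phi> (norm (Z i - x)))" for i
      by (rule continuous_on_compose2[OF phi_cont]) (auto intro!: continuous_intros)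
    show ?thesis unfolding F_def map_S_def
      by (intro continuous_intros c)
  qed
  have third: "(\<lambda>h. infdist (\<Sigma> h) U) \<longlonglongrightarrow> 0"
  proof (rule LIMSEQ_I)
    fix e :: real assume e: "e > 0"
    define Ke where "Ke = K \<inter> {x. e \<le> infdist x U}"
    have Kec: "compact Ke" unfolding Ke_def
      by (intro compact_Int_closed Kc closed_Collect_le continuous_intros continuous_on_infdist)
    have "\<exists>d>0. \<forall>x\<in>Ke. d \<le> F x"
    proof (cases "Ke = {}")
      case True thus ?thesis by (intro exI[of _ 1]) auto
    next
      case False
      obtain x0 where x0: "x0 \<in> Ke" "\<forall>y\<in>Ke. F x0 \<le> F y"
        using continuous_attains_inf[OF Kec False continuous_on_subset[OF Fcont]] by blast
      have "F x0 \<noteq> 0"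
      proof
        assume "F x0 = 0"
        hence "x0 \<in> U" by (simp add: F_def U_def zero_set_U_def)
        hence "infdist x0 U = 0" by (rule infdist_zero)
        thus False using x0(1) e by (simp add: Ke_def)
      qed
      hence "F x0 > 0" by (simp add: F_def)
      thus ?thesis using x0 by blast
    qed
    then obtain d where d: "d > 0" "\<And>x. x \<in> Ke \<Longrightarrow> d \<le> F x" by blast
    obtain N where N: "\<And>h. h \<ge> N \<Longrightarrow> norm (F (\<Sigma> h) - 0) < d"
      using LIMSEQ_D[OF S0[folded F_def] d(1)] by blast
    show "\<exists>no. \<forall>h\<ge>no. norm (infdist (\<Sigma> h) U - 0) < e"
    proof (intro exI[of _ "Suc N"] allI impI)
      fix h assume h: "h \<ge> Suc N"
      then obtain k where k: "h = Suc k" by (cases h) auto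
      have "\<Sigma> h \<in> K" using inK k by simp
      moreover have "F (\<Sigma> h) < d" using N[of h] h by (simp add: F_def)
      ultimately have "\<Sigma> h \<notin> Ke" using d(2) by force
      hence "infdist (\<Sigma> h) U < e" using \<open>\<Sigma> h \<in> K\<close> by (simp add: Ke_def)
      thus "norm (infdist (\<Sigma> h) U - 0) < e" by (simp add: infdist_nonneg)
    qed
  qed
  have Jf: "J = (\<lambda>h. obj_J \<zeta> n Z (\<Sigma> h))" by (simp add: J_def fun_eq_iff)
  show ?thesis
    unfolding Zeq
    using dec JL[unfolded Jf] third by (auto simp: J_def U_def convergent_def)
qed

end
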